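(* Let $\mathbf{A}\in\mathbb{R}^{M\times N}$, $\mathbf{Y}\in\mathbb{R}^{M\times L}$, and let $(\mathbf{g}(t),\mathbf{V}(t))$, $t\ge0$, evolve under the continuous gradient flow of $\mathcal{L}(\mathbf{g},\mathbf{V})=\Vert\mathbf{Y}-\mathbf{A}((\mathbf{g}^{\odot 2}\mathbf{1}_L)\odot\mathbf{V})\Vert_F^2$ with initialization $\mathbf{g}(0)$ having all entries equal to $\alpha_g$ and $\mathbf{V}(0)=\alpha_V\mathbf{1}_{N\times L}$, where $\alpha_g,\alpha_V$ are small positive scalars. Let $\mathbf{X}(t)=(\mathbf{g}(t)^{\odot 2}\mathbf{1}_L)\odot\mathbf{V}(t)$, $\boldsymbol{\Lambda}(t)=\mathbf{A}^\top(\mathbf{Y}-\mathbf{A}\mathbf{X}(t))$, $\boldsymbol{\lambda}_i(t)$ the $i$-th row of $\boldsymbol{\Lambda}(t)$, and $\hat{\mathbf{x}}_i(t)=\mathbf{X}_{i:}(t)/\Vert\mathbf{X}_{i:}(t)\Vert_2$ if $\Vert\mathbf{X}_{i:}(t)\Vert_2\ne0$ and $\hat{\mathbf{x}}_i(t)=\mathbf{0}$ otherwise. Let $\epsilon=\left|\frac12\Vert\mathbf{g}(t)\Vert_2^2-\Vert\mathbf{V}(t)\Vert_F^2\right|$ (which is independent of $t$). Then for any $t\ge0$ and all $i\in[N]$ with $g_i^2(t)>0$ and $\sum_{m\in[L]}V_{im}^2(t)>0$: if $\langle\boldsymbol{\lambda}_i(t),\hat{\mathbf{x}}_i(t)\rangle\ge0$,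 then $$\frac{d}{dt}\Vert\mathbf{X}_{i:}(t)\Vert_2\le 24\langle\boldsymbol{\lambda}_i(t),\hat{\mathbf{x}}_i(t)\rangle\left(\epsilon+\Vert\mathbf{X}_{i:}(t)\Vert_2^{2/3}\right)^2,\qquad \frac{d}{dt}\Vert\mathbf{X}_{i:}(t)\Vert_2\ge 6\langle\boldsymbol{\lambda}_i(t),\hat{\mathbf{x}}_i(t)\rangle\frac{\Vert\mathbf{X}_{i:}(t)\Vert_2^2}{\epsilon+\Vert\mathbf{X}_{i:}(t)\Vert_2^{2/3}};$$ if $\langle\boldsymbol{\lambda}_i(t),\hat{\mathbf{x}}_i(t)\rangle<0$, then $$\frac{d}{dt}\Vert\mathbf{X}_{i:}(t)\Vert_2\ge 24\langle\boldsymbol{\lambda}_i(t),\hat{\mathbf{x}}_i(t)\rangle\left(\epsilon+\Vert\mathbf{X}_{i:}(t)\Vert_2^{2/3}\right)^2,\qquad \frac{d}{dt}\Vert\mathbf{X}_{i:}(t)\Vert_2\le 6\langle\boldsymbol{\lambda}_i(t),\hat{\mathbf{x}}_i(t)\rangle\frac{\Vert\mathbf{X}_{i:}(t)\Vert_2^2}{\epsilon+\Vert\mathbf{X}_{i:}(t)\Vert_2^{2/3}}.$$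
   Context: $\odot$ is the entrywise product, $\mathbf{1}_L$ the $1\times L$ all-ones row vector, $\mathbf{1}_{N\times L}$ the all-ones matrix, so $X_{ij}=g_i^2V_{ij}$; $\mathbf{X}_{i:}$ denotes the $i$-th row. Gradient flow: $\frac{d}{dt}g_l=-\partial\mathcal{L}/\partial g_l$ and $\frac{d}{dt}V_{lm}=-\partial\mathcal{L}/\partial V_{lm}$ evaluated along the curve. *)

theory Defs
  imports "HOL-Analysis.Analysis"
begin

text \<open>Matrices are indexed by finite types: A :: real^'n^'m is M x N,
  Y :: real^'l^'m is M x L, g :: real^'n, V :: real^'l^'n.\<close>

definition frob_sq :: "real^'c^'r \<Rightarrow> real" where
  "frob_sq B = (\<Sum>i\<in>UNIV. \<Sum>j\<in>UNIV. (B $ i $ j)^2)"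

definition Xmat :: "real^'n \<Rightarrow> real^'l^'n \<Rightarrow> real^'l^'n" where
  "Xmat g V = (\<chi> i j. (g $ i)^2 * V $ i $ j)"

definition loss :: "real^'n^'m \<Rightarrow> real^'l^'m \<Rightarrow> real^'n \<Rightarrow> real^'l^'n \<Rightarrow> real" where
  "loss A Y g V = frob_sq (Y - A ** Xmat g V)"

definition Lam :: "real^'n^'m \<Rightarrow> real^'l^'m \<Rightarrow> real^'n \<Rightarrow> real^'l^'n \<Rightarrow> real^'l^'n" where
  "Lam A Y g V = transpose A ** (Y - A ** Xmat g V)"

definition xhat :: "real^'l \<Rightarrow> real^'l" where
  "xhat x = (if norm x \<noteq> 0 then (1 / norm x) *\<^sub>R x else 0)"

text \<open>Gradient flow: each coordinate has a (one-sided at 0) time derivative equal to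
  minus the partial derivative of the loss in that coordinate, evaluated along the curve.\<close>
definition grad_flow :: "real^'n^'m \<Rightarrow> real^'l^'m \<Rightarrow> (real \<Rightarrow> real^'n) \<Rightarrow> (real \<Rightarrow> real^'l^'n) \<Rightarrow> bool" where
  "grad_flow A Y g V \<longleftrightarrow>
    (\<forall>t\<ge>0. (\<forall>k. \<exists>D. ((\<lambda>s. g s $ k) has_real_derivative D) (at t within {0..}) \<and>
        ((\<lambda>u. loss A Y (\<chi> k'. if k' = k then u else g t $ k') (V t)) has_real_derivative (- D)) (at (g t $ k)))
     \<and> (\<forall>k m. \<exists>D. ((\<lambda>s. V s $ k $ m) has_real_derivative D) (at t within {0..}) \<and>
        ((\<lambda>u. loss A Y (g t) (\<chi> k' m'. if k' = k \<and> m' = m then u else V t $ k' $ m'))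
            has_real_derivative (- D)) (at (V t $ k $ m))))"

end

theory Submission
  imports Defs
begin


lemma cube_le: "(x::real)^3 \<le> y^3 \<Longrightarrow> 0 \<le> y \<Longrightarrow> x \<le> y"
  using power_le_imp_le_base[of x 2 y] by (simp add: numeral_3_eq_3)

lemma t3: fixes a b :: real shows "(8*b+2*a)^3 = 8*(4*b+a)^3" 
proof - have e: "8*b+2*a = 2*(4*b+a)" by simp
 show ?thesis unfolding e power_mult_distrib by simp qed
lemma t4: fixes a b u :: real assumes u3: "u^3 = a^2 * b" shows "8 * (4*b+a)^3 * (a^2*b) = ((8*b+2*a)*u)^3"
  by (simp only: power_mult_distrib t3 u3)

lemma lo_aux:
  fixes a b u :: real
  assumes a: "a > 0" and b: "b > 0" and u: "u > 0" and u3: "u^3 = a^2 * b"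
  shows "6 * a * b \<le> (8*b + 2*a) * u"
proof -
  have "(6*a*b)^3 \<le> ((8*b+2*a)*u)^3"
  proof -
    have "(6*a*b)^3 = 216 * a * b^2 * (a^2*b)" by (simp add: power3_eq_cube power2_eq_square)
    also have "\<dots> \<le> 8 * (4*b+a)^3 * (a^2*b)"
    proof -
      have "27 * a * b^2 \<le> (4*b+a)^3"
      proof -
        have "(4*b+a)^3 = 64*b^3 + 48*a*b^2 + 12*a^2*b + a^3" by (simp add: power3_eq_cube power2_eq_square algebra_simps)
        moreover have "0 \<le> 64*b^3 + 21*a*b^2 + 12*a^2*b + a^3" using a b by (intro add_nonneg_nonneg mult_nonneg_nonneg) auto
        ultimately show ?thesis by simp
      qed
      hence "216 * a * b^2 \<le> 8 * (4*b+a)^3" by simp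
      thus ?thesis using a b by (intro mult_right_mono) auto
    qed
    also have "\<dots> = ((8*b+2*a)*u)^3" by (rule t4[OF u3])
    finally show ?thesis .
  qed
  from cube_le[OF this] show ?thesis using a b u by auto
qed

lemma up_aux:
  fixes a b u e :: real
  assumes a: "a > 0" and b: "b > 0" and u: "u > 0" and u3: "u^3 = a^2 * b" and e: "\<bar>a/2 - b\<bar> \<le> e"
  shows "8*a*b + 2*a^2 \<le> 24 * (e + u)^2"
proof (cases "a \<ge> 2*b")
  case True
  have "b^3 \<le> u^3"
  proof -
    have "b^2 \<le> a^2" using True a b by (intro power_mono) auto
    hence "b^2 * b \<le> a^2 * b" using b by (intro mult_right_mono) auto
    thus ?thesis unfolding u3 by (simp add: power3_eq_cube power2_eq_square)
  qed
  from cube_le[OF this] have "b \<le> u" using u by auto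
  hence "a \<le> 2*(e+u)" using e True by auto
  hence "a^2 \<le> (2*(e+u))^2" using a by (intro power_mono) auto
  moreover have "8*a*b \<le> 4*a^2" using True a by (simp add: power2_eq_square)
  moreover have "(2*(e+u))^2 = 4*(e+u)^2" by (simp only: power_mult_distrib) simp
  ultimately show ?thesis by linarith
next
  case False
  have "a^3 \<le> (2*u)^3"
  proof -
    have "a^3 \<le> 8 * (a^2 * b)" using False a b by (simp add: power3_eq_cube power2_eq_square mult_left_mono)
    thus ?thesis unfolding power_mult_distrib u3 by simp
  qed
  from cube_le[OF this] have au: "a \<le> 2*u" using u by auto
  have be: "b \<le> a/2 + e" using e by auto
  have e0: "e \<ge> 0" using e by linarith
  have "8*a*b \<le> 8*a*(a/2+e)" using be a by simp
  also have "\<dots> = 4*a^2 + 8*a*e" by (simp add: algebra_simps power2_eq_square)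
  finally have "8*a*b + 2*a^2 \<le> 6*a^2 + 8*a*e" by simp
  also have "\<dots> \<le> 6*(2*u)^2 + 8*(2*u)*e" using au a e0
    by (intro add_mono mult_left_mono mult_right_mono power_mono) auto
  also have "\<dots> \<le> 24 * (e+u)^2" using e0 u by (simp add: power2_eq_square algebra_simps)
  finally show ?thesis .
qed

lemma final_ineq:
  fixes a b e nx ip K :: real
  assumes a: "a > 0" and b: "b > 0" and e: "\<bar>a/2 - b\<bar> \<le> e" and nx: "nx = a * sqrt b"
    and K: "K = ip * (8*a*b + 2*a^2)"
  shows "(ip \<ge> 0 \<longrightarrow> K \<le> 24 * ip * (e + nx powr (2/3))^2 \<and>
                            K \<ge> 6 * ip * nx^2 / (e + nx powr (2/3))) \<and>
              (ip < 0 \<longrightarrow> K \<ge> 24 * ip * (e + nx powr (2/3))^2 \<and>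
                          K \<le> 6 * ip * nx^2 / (e + nx powr (2/3)))"
proof -
  define u where "u = nx powr (2/3)"
  have nxp: "nx > 0" using a b nx by simp
  have u0: "u > 0" unfolding u_def using nxp by simp
  have nx2: "nx^2 = a^2 * b" using b nx by (simp add: power_mult_distrib)
  have u3: "u^3 = a^2 * b"
  proof -
    have "u^3 = u powr (real 3)" using u0 by (rule powr_realpow[symmetric])
    also have "\<dots> = nx powr ((2/3) * real 3)" unfolding u_def by (simp only: powr_powr)
    also have "\<dots> = nx powr (real 2)" by simp
    also have "\<dots> = nx^2" using nxp by (rule powr_realpow)
    finally show ?thesis using nx2 by simp
  qed
  have e0: "e \<ge> 0" using e by linarith
  have eu: "e + u > 0" using e0 u0 by linarith
  have UP: "8*a*b + 2*a^2 \<le> 24 * (e + u)^2" by (rule up_aux[OF a b u0 u3 e])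
  have LO: "6 * nx^2 \<le> (8*a*b + 2*a^2) * (e + u)"
  proof -
    have "6 * nx^2 = a * (6*a*b)" unfolding nx2 by (simp add: power2_eq_square)
    also have "\<dots> \<le> a * ((8*b+2*a)*u)" using lo_aux[OF a b u0 u3] a by (intro mult_left_mono) auto
    also have "\<dots> = (8*a*b + 2*a^2) * u" by (simp add: algebra_simps power2_eq_square)
    also have "\<dots> \<le> (8*a*b + 2*a^2) * (e + u)" using a b e0 by (intro mult_left_mono) auto
    finally show ?thesis .
  qed
  have LO': "6 * nx^2 / (e + u) \<le> 8*a*b + 2*a^2" using LO eu by (simp add: divide_le_eq)
  have eqd: "6 * ip * nx^2 / (e + u) = ip * (6 * nx^2 / (e + u))" by simp
  show ?thesis unfolding u_def[symmetric] K eqd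
  proof (intro conjI impI)
    assume ip: "ip \<ge> 0"
    show "ip * (8*a*b + 2*a^2) \<le> 24 * ip * (e + u)^2" using mult_left_mono[OF UP ip] by simp
    show "ip * (6 * nx^2 / (e + u)) \<le> ip * (8*a*b + 2*a^2)" using mult_left_mono[OF LO' ip] by simp
  next
    assume ip: "ip < 0"
    show "24 * ip * (e + u)^2 \<le> ip * (8*a*b + 2*a^2)" using mult_left_mono_neg[OF UP, of ip] ip by simp
    show "ip * (8*a*b + 2*a^2) \<le> ip * (6 * nx^2 / (e + u))" using mult_left_mono_neg[OF LO', of ip] ip by simp
  qed
qed



lemma loss_expand: "loss A Y g V = (\<Sum>p\<in>UNIV. \<Sum>j\<in>UNIV. (Y$p$j - (\<Sum>q\<in>UNIV. A$p$q * ((g$q)^2 * V$q$j)))^2)"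
  unfolding loss_def frob_sq_def matrix_matrix_mult_def Xmat_def by simp

lemma Lam_expand: "Lam A Y g V $ k $ j = (\<Sum>p\<in>UNIV. A$p$k * (Y$p$j - (\<Sum>q\<in>UNIV. A$p$q * ((g$q)^2 * V$q$j))))"
  unfolding Lam_def matrix_matrix_mult_def transpose_def Xmat_def by simp

lemma sum_split_if:
  fixes k :: "'a::finite"
  shows "(\<Sum>q\<in>UNIV. f q (if q = k then u else h q)) = f k u + (\<Sum>q\<in>UNIV-{k}. f q (h q))"
proof -
  have "(\<Sum>q\<in>UNIV. f q (if q = k then u else h q)) = f k u + (\<Sum>q\<in>UNIV-{k}. f q (if q = k then u else h q))"
    using sum.remove[of UNIV k "\<lambda>q. f q (if q = k then u else h q)"] by simp
  also have "(\<Sum>q\<in>UNIV-{k}. f q (if q = k then u else h q)) = (\<Sum>q\<in>UNIV-{k}. f q (h q))"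
    by (rule sum.cong) auto
  finally show ?thesis .
qed

lemma dloss_g:
  fixes A :: "real^'n^'m" and Y :: "real^'l^'m" and g :: "real^'n" and V :: "real^'l^'n"
  shows "((\<lambda>u. loss A Y (\<chi> k'. if k' = k then u else g $ k') V) has_real_derivative
     (- 4 * (g$k) * (\<Sum>j\<in>UNIV. V$k$j * Lam A Y g V $ k $ j))) (at (g$k))"
proof -
  define C where "C p j = (\<Sum>q\<in>UNIV-{k}. A$p$q * ((g$q)^2 * V$q$j))" for p j
  have eq: "(\<lambda>u. loss A Y (\<chi> k'. if k' = k then u else g $ k') V)
     = (\<lambda>u. \<Sum>p\<in>UNIV. \<Sum>j\<in>UNIV. (Y$p$j - (A$p$k * (u^2 * V$k$j) + C p j))^2)"
    unfolding loss_expand C_def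
    by (simp add: sum_split_if[where f="\<lambda>q x. A$_$q * (x^2 * V$q$_)" for A V])
  have R: "Y$p$j - (A$p$k * ((g$k)^2 * V$k$j) + C p j) = Y$p$j - (\<Sum>q\<in>UNIV. A$p$q * ((g$q)^2 * V$q$j))" for p j
    unfolding C_def by (simp add: sum.remove)
  have d: "((\<lambda>u. \<Sum>p\<in>UNIV. \<Sum>j\<in>UNIV. (Y$p$j - (A$p$k * (u^2 * V$k$j) + C p j))^2) has_real_derivative
     (\<Sum>p\<in>UNIV. \<Sum>j\<in>UNIV. 2 * (Y$p$j - (A$p$k * ((g$k)^2 * V$k$j) + C p j)) * (- (A$p$k * (2 * g$k * V$k$j))))) (at (g$k))"
    by (auto intro!: derivative_eq_intros sum.cong simp: algebra_simps)
  have val: "(\<Sum>p\<in>UNIV. \<Sum>j\<in>UNIV. 2 * (Y$p$j - (A$p$k * ((g$k)^2 * V$k$j) + C p j)) * (- (A$p$k * (2 * g$k * V$k$j))))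
     = - 4 * (g$k) * (\<Sum>j\<in>UNIV. V$k$j * Lam A Y g V $ k $ j)"
  proof -
    define Rm where "Rm p j = Y$p$j - (\<Sum>q\<in>UNIV. A$p$q * ((g$q)^2 * V$q$j))" for p j
    have L: "Lam A Y g V $ k $ j = (\<Sum>p\<in>UNIV. A$p$k * Rm p j)" for j unfolding Lam_expand Rm_def ..
    have "(\<Sum>p\<in>UNIV. \<Sum>j\<in>UNIV. 2 * (Y$p$j - (A$p$k * ((g$k)^2 * V$k$j) + C p j)) * (- (A$p$k * (2 * g$k * V$k$j))))
       = (\<Sum>p\<in>UNIV. \<Sum>j\<in>UNIV. (- 4 * (g$k)) * (V$k$j * (A$p$k * Rm p j)))"
      unfolding R Rm_def by (intro sum.cong refl) (simp add: algebra_simps)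
    also have "\<dots> = (- 4 * (g$k)) * (\<Sum>j\<in>UNIV. V$k$j * (\<Sum>p\<in>UNIV. A$p$k * Rm p j))"
      by (subst sum.swap) (simp add: sum_distrib_left)
    finally show ?thesis unfolding L .
  qed
  show ?thesis using d unfolding eq val .
qed

lemma dloss_V:
  fixes A :: "real^'n^'m" and Y :: "real^'l^'m" and g :: "real^'n" and V :: "real^'l^'n"
  shows "((\<lambda>u. loss A Y g (\<chi> k' m'. if k' = k \<and> m' = m then u else V $ k' $ m')) has_real_derivative
     (- 2 * (g$k)^2 * Lam A Y g V $ k $ m)) (at (V$k$m))"
proof -
  define Rm where "Rm p j = Y$p$j - (\<Sum>q\<in>UNIV. A$p$q * ((g$q)^2 * V$q$j))" for p j
  have inner: "(\<Sum>q\<in>UNIV. A$p$q * ((g$q)^2 * (if q = k \<and> j = m then u else V$q$j)))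
     = (\<Sum>q\<in>UNIV. A$p$q * ((g$q)^2 * V$q$j)) + (if j = m then 1 else 0) * (A$p$k * (g$k)^2 * (u - V$k$m))" for p j u
  proof (cases "j = m")
    case True
    have "(\<Sum>q\<in>UNIV. A$p$q * ((g$q)^2 * (if q = k \<and> j = m then u else V$q$j)))
       = (\<Sum>q\<in>UNIV. A$p$q * ((g$q)^2 * V$q$j) + (if q = k then A$p$k * (g$k)^2 * (u - V$k$m) else 0))"
      using True by (intro sum.cong refl) (auto simp: algebra_simps)
    also have "\<dots> = (\<Sum>q\<in>UNIV. A$p$q * ((g$q)^2 * V$q$j)) + A$p$k * (g$k)^2 * (u - V$k$m)"
      by (simp add: sum.distrib)
    finally show ?thesis using True by simp
  qed simp
  have eq: "(\<lambda>u. loss A Y g (\<chi> k' m'. if k' = k \<and> m' = m then u else V $ k' $ m'))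
     = (\<lambda>u. \<Sum>p\<in>UNIV. \<Sum>j\<in>UNIV. (Rm p j - (if j = m then 1 else 0) * (A$p$k * (g$k)^2 * (u - V$k$m)))^2)"
    unfolding loss_expand Rm_def by (simp add: inner algebra_simps)
  have d: "((\<lambda>u. \<Sum>p\<in>UNIV. \<Sum>j\<in>UNIV. (Rm p j - (if j = m then 1 else 0) * (A$p$k * (g$k)^2 * (u - V$k$m)))^2) has_real_derivative
     (\<Sum>p\<in>UNIV. \<Sum>j\<in>UNIV. 2 * Rm p j * (- ((if j = m then 1 else 0) * (A$p$k * (g$k)^2))))) (at (V$k$m))"
    by (auto intro!: derivative_eq_intros sum.cong simp: algebra_simps)
  have L: "Lam A Y g V $ k $ j = (\<Sum>p\<in>UNIV. A$p$k * Rm p j)" for j unfolding Lam_expand Rm_def ..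
  have val: "(\<Sum>p\<in>UNIV. \<Sum>j\<in>UNIV. 2 * Rm p j * (- ((if j = m then 1 else 0) * (A$p$k * (g$k)^2))))
     = - 2 * (g$k)^2 * Lam A Y g V $ k $ m"
  proof -
    have j: "(\<Sum>j\<in>UNIV. 2 * Rm p j * (- ((if j = m then 1 else 0) * (A$p$k * (g$k)^2))))
        = (\<Sum>j\<in>UNIV. if j = m then - 2 * (g$k)^2 * (A$p$k * Rm p m) else 0)" for p
      by (intro sum.cong refl) auto
    show ?thesis unfolding L j by (simp add: sum_distrib_left)
  qed
  show ?thesis using d unfolding eq val .
qed

lemma gf_g:
  assumes "grad_flow A Y g V" "s \<ge> 0"
  shows "((\<lambda>s. g s $ k) has_real_derivative 4 * (g s $ k) * (\<Sum>j\<in>UNIV. V s $k$j * Lam A Y (g s) (V s) $k$j)) (at s within {0..})"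
proof -
  from assms obtain D where D1: "((\<lambda>s. g s $ k) has_real_derivative D) (at s within {0..})"
    and D2: "((\<lambda>u. loss A Y (\<chi> k'. if k' = k then u else g s $ k') (V s)) has_real_derivative (- D)) (at (g s $ k))"
    unfolding grad_flow_def by blast
  from DERIV_unique[OF D2 dloss_g] have "D = 4 * (g s $ k) * (\<Sum>j\<in>UNIV. V s $k$j * Lam A Y (g s) (V s) $k$j)" by simp
  with D1 show ?thesis by simp
qed

lemma gf_V:
  assumes "grad_flow A Y g V" "s \<ge> 0"
  shows "((\<lambda>s. V s $ k $ m) has_real_derivative 2 * (g s $ k)^2 * Lam A Y (g s) (V s) $k$m) (at s within {0..})"
proof -
  from assms obtain D where D1: "((\<lambda>s. V s $ k $ m) has_real_derivative D) (at s within {0..})"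
    and D2: "((\<lambda>u. loss A Y (g s) (\<chi> k' m'. if k' = k \<and> m' = m then u else V s $ k' $ m')) has_real_derivative (- D)) (at (V s $ k $ m))"
    unfolding grad_flow_def by blast
  from DERIV_unique[OF D2 dloss_V] have "D = 2 * (g s $ k)^2 * Lam A Y (g s) (V s) $k$m" by simp
  with D1 show ?thesis by simp
qed

lemma conserv:
  assumes "grad_flow A Y g V" "s \<ge> 0"
  shows "(g s $ k)^2/2 - (\<Sum>j\<in>UNIV. (V s $k$j)^2) = (g 0 $ k)^2/2 - (\<Sum>j\<in>UNIV. (V 0 $k$j)^2)"
proof -
  define h where "h s = (g s $ k)^2/2 - (\<Sum>j\<in>UNIV. (V s $k$j)^2)" for s
  have "(h has_real_derivative 0) (at x within {0..})" if "x \<in> {0..}" for x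
  proof -
    have x: "x \<ge> 0" using that by simp
    note d1 = gf_g[OF assms(1) x, of k] and d2 = gf_V[OF assms(1) x, of k]
    have "(h has_real_derivative (2 * (g x $ k) * (4 * (g x $ k) * (\<Sum>j\<in>UNIV. V x $k$j * Lam A Y (g x) (V x) $k$j)) / 2
       - (\<Sum>j\<in>UNIV. 2 * V x $k$j * (2 * (g x $ k)^2 * Lam A Y (g x) (V x) $k$j)))) (at x within {0..})"
      unfolding h_def
      by (auto intro!: derivative_eq_intros d1 d2 sum.cong simp: algebra_simps)
    moreover have "2 * (g x $ k) * (4 * (g x $ k) * (\<Sum>j\<in>UNIV. V x $k$j * Lam A Y (g x) (V x) $k$j)) / 2
       - (\<Sum>j\<in>UNIV. 2 * V x $k$j * (2 * (g x $ k)^2 * Lam A Y (g x) (V x) $k$j)) = 0"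
    proof -
      have "(\<Sum>j\<in>UNIV. 2 * V x $k$j * (2 * (g x $ k)^2 * Lam A Y (g x) (V x) $k$j))
          = 4 * (g x $ k)^2 * (\<Sum>j\<in>UNIV. V x $k$j * Lam A Y (g x) (V x) $k$j)"
        by (simp add: sum_distrib_left mult_ac)
      thus ?thesis by (simp add: power2_eq_square)
    qed
    ultimately show ?thesis by simp
  qed
  from has_field_derivative_zero_constant[OF convex_real_interval(1) this]
  obtain c where "\<forall>x\<in>{0..}. h x = c" by blast
  with assms(2) have "h s = h 0" by auto
  thus ?thesis unfolding h_def .
qed



theorem lemma5p2:
  fixes A :: "real^'n^'m" and Y :: "real^'l^'m"
    and g :: "real \<Rightarrow> real^'n" and V :: "real \<Rightarrow> real^'l^'n"
    and \<alpha>g \<alpha>V t :: real and i :: 'n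
  assumes "\<alpha>g > 0" and "\<alpha>V > 0"
    and "grad_flow A Y g V"
    and "g 0 = (\<chi> k. \<alpha>g)" and "V 0 = (\<chi> k m. \<alpha>V)"
    and "t \<ge> 0"
    and "(g t $ i)^2 > 0" and "(\<Sum>m\<in>UNIV. (V t $ i $ m)^2) > 0"
  shows "let \<epsilon> = \<bar>(1/2) * (norm (g t))^2 - frob_sq (V t)\<bar>;
             nx = norm (Xmat (g t) (V t) $ i);
             ip = (Lam A Y (g t) (V t) $ i) \<bullet> xhat (Xmat (g t) (V t) $ i)
         in \<exists>D. ((\<lambda>s. norm (Xmat (g s) (V s) $ i)) has_real_derivative D) (at t within {0..}) \<and>
              (ip \<ge> 0 \<longrightarrow> D \<le> 24 * ip * (\<epsilon> + nx powr (2/3))^2 \<and>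
                            D \<ge> 6 * ip * nx^2 / (\<epsilon> + nx powr (2/3))) \<and>
              (ip < 0 \<longrightarrow> D \<ge> 24 * ip * (\<epsilon> + nx powr (2/3))^2 \<and>
                          D \<le> 6 * ip * nx^2 / (\<epsilon> + nx powr (2/3)))"
proof -
  note gf = assms(3) and t0 = assms(6)
  define G where "G = g t $ i"
  define a where "a = G^2"
  define v where "v j = V t $ i $ j" for j
  define lam where "lam j = Lam A Y (g t) (V t) $ i $ j" for j
  define S where "S = (\<Sum>j\<in>UNIV. v j * lam j)"
  define b where "b = (\<Sum>j\<in>UNIV. (v j)^2)"
  have a0: "a > 0" using assms(7) unfolding a_def G_def .
  have b0: "b > 0" using assms(8) unfolding b_def v_def .
  have sb0: "sqrt b > 0" using b0 by simp
  have gd: "((\<lambda>s. g s $ i) has_real_derivative 4 * G * S) (at t within {0..})"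
    using gf_g[OF gf t0, of i] unfolding G_def S_def v_def lam_def .
  have vd: "((\<lambda>s. V s $ i $ j) has_real_derivative 2 * a * lam j) (at t within {0..})" for j
    using gf_V[OF gf t0, of i j] unfolding a_def G_def lam_def .
  have nrm: "norm (Xmat (g s) (V s) $ i) = sqrt (\<Sum>j\<in>UNIV. ((g s $ i)^2 * V s $ i $ j)^2)" for s
    by (simp add: norm_vec_def L2_set_def Xmat_def)
  define P where "P = (\<Sum>j\<in>UNIV. ((g t $ i)^2 * V t $ i $ j)^2)"
  define Q where "Q = (\<Sum>j\<in>UNIV. 2 * (a * v j) * (2 * G * (4 * G * S) * v j + a * (2 * a * lam j)))"
  have Peq: "P = a^2 * b" unfolding P_def b_def a_def G_def v_def
    by (simp add: sum_distrib_left power_mult_distrib)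
  have P0: "P > 0" using a0 b0 Peq by simp
  have Qeq: "Q = 2 * a^2 * S * (8*b + 2*a)"
  proof -
    have GG: "2 * G * (4 * G * S) = 8 * a * S" unfolding a_def by (simp add: power2_eq_square algebra_simps)
    have "Q = (\<Sum>j\<in>UNIV. 16 * a^2 * S * (v j)^2 + 4 * a^3 * (v j * lam j))"
      unfolding Q_def GG by (intro sum.cong refl) (simp add: algebra_simps power2_eq_square power3_eq_cube)
    also have "\<dots> = 16 * a^2 * S * b + 4 * a^3 * S"
      unfolding b_def S_def by (simp add: sum.distrib sum_distrib_left)
    finally show ?thesis by (simp add: algebra_simps power2_eq_square power3_eq_cube)
  qed
  have dP: "((\<lambda>s. \<Sum>j\<in>UNIV. ((g s $ i)^2 * V s $ i $ j)^2) has_real_derivative Q) (at t within {0..})"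
    unfolding Q_def
    by (auto intro!: derivative_eq_intros gd vd sum.cong simp: a_def G_def v_def algebra_simps power2_eq_square power3_eq_cube)
  have dN: "((\<lambda>s. norm (Xmat (g s) (V s) $ i)) has_real_derivative (inverse (sqrt P) / 2 * Q)) (at t within {0..})"
  proof -
    have sq: "(sqrt has_real_derivative inverse (sqrt P) / 2) (at ((\<lambda>s. \<Sum>j\<in>UNIV. ((g s $ i)^2 * V s $ i $ j)^2) t))"
      using DERIV_real_sqrt[OF P0] unfolding P_def by simp
    show ?thesis unfolding nrm by (rule DERIV_chain2[OF sq dP])
  qed
  define nx where "nx = norm (Xmat (g t) (V t) $ i)"
  have nxeq: "nx = a * sqrt b" unfolding nx_def nrm P_def[symmetric] Peq using a0
    by (simp add: real_sqrt_mult)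
  define ip where "ip = (Lam A Y (g t) (V t) $ i) \<bullet> xhat (Xmat (g t) (V t) $ i)"
  have ipeq: "ip = S / sqrt b"
  proof -
    have nz: "norm (Xmat (g t) (V t) $ i) = a * sqrt b" using nxeq nx_def by simp
    have "ip = (\<Sum>j\<in>UNIV. lam j * ((1 / (a * sqrt b)) * (a * v j)))"
      unfolding ip_def xhat_def nz using a0 sb0
      by (simp add: inner_vec_def lam_def v_def Xmat_def a_def G_def)
    also have "\<dots> = (\<Sum>j\<in>UNIV. (v j * lam j) / sqrt b)"
      using a0 by (intro sum.cong refl) simp
    also have "\<dots> = S / sqrt b" unfolding S_def by (simp add: sum_divide_distrib)
    finally show ?thesis .
  qed
  have Keq: "inverse (sqrt P) / 2 * Q = ip * (8*a*b + 2*a^2)"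
  proof -
    have "sqrt P = a * sqrt b" unfolding Peq using a0 by (simp add: real_sqrt_mult)
    thus ?thesis unfolding Qeq ipeq using a0 sb0
      by (simp add: field_simps power2_eq_square)
  qed
  define \<epsilon> where "\<epsilon> = \<bar>(1/2) * (norm (g t))^2 - frob_sq (V t)\<bar>"
  define c where "c = \<alpha>g^2/2 - (\<Sum>j\<in>(UNIV::'l set). \<alpha>V^2)"
  have hk: "(g t $ k)^2/2 - (\<Sum>j\<in>UNIV. (V t $k$j)^2) = c" for k
    using conserv[OF gf t0, of k] unfolding assms(4,5) c_def by simp
  have "(1/2) * (norm (g t))^2 - frob_sq (V t) = (\<Sum>k\<in>UNIV. (g t $ k)^2/2 - (\<Sum>j\<in>UNIV. (V t $k$j)^2))"
  proof -
    have "norm (g t)^2 = (\<Sum>k\<in>UNIV. (g t $ k)^2)"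
      unfolding power2_norm_eq_inner inner_vec_def by (simp add: power2_eq_square)
    thus ?thesis unfolding frob_sq_def by (simp add: sum_subtractf sum_divide_distrib)
  qed
  also have "\<dots> = real CARD('n) * c" using hk by simp
  finally have epsc: "\<epsilon> = real CARD('n) * \<bar>c\<bar>" unfolding \<epsilon>_def by (simp add: abs_mult)
  have "\<bar>c\<bar> \<le> \<epsilon>" unfolding epsc
    using mult_right_mono[of 1 "real CARD('n)" "\<bar>c\<bar>"] by simp
  moreover have "c = a/2 - b" using hk[of i] unfolding a_def G_def b_def v_def by simp
  ultimately have e: "\<bar>a/2 - b\<bar> \<le> \<epsilon>" by simp
  note fin = final_ineq[OF a0 b0 e nxeq Keq]
  show ?thesis unfolding Let_def \<epsilon>_def[symmetric] nx_def[symmetric] ip_def[symmetric]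
    using dN fin by blast
qed

end
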